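(* Under the setting below, suppose that for some $\tau_c\in(0,\bar\tau)$ the equation $\Delta(\lambda,\tau_c):=\lambda+A(\tau_c)-B(\tau_c)e^{-\lambda\tau_c}=0$ has a pair of purely imaginary roots $\pm i\omega(\tau_c)$ with $\omega(\tau_c)>0$. Then $\pm i\omega(\tau_c)$ are simple roots, so there is a $C^1$ branch of roots $\lambda(\tau)$ near $\tau_c$ with $\lambda(\tau_c)=i\omega(\tau_c)$, and $$\mathrm{sign}\left\{\frac{d\,\mathrm{Re}\,\lambda}{d\tau}\Big|_{\tau=\tau_c}\right\}=\mathrm{sign}\Big\{-B^3-B^2B'\tau_c+B\,(A^2+A'+AA'\tau_c)-B'A\Big\},$$ where $A=A(\tau_c)$, $B=B(\tau_c)$, $A'=A'(\tau_c)$, $B'=B'(\tau_c)$.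
   Context: Let $\delta>0$ and $\beta:[0,+\infty)\to(0,+\infty)$ twice continuously differentiable, strictly decreasing, with $\beta'(s)<0$ for $s>0$, $\lim_{S\to+\infty}\beta(S)=0$, and $\delta<\beta(0)$. Let $\bar\tau:=\frac1\delta\ln\!\big(\frac{2\beta(0)}{\delta+\beta(0)}\big)$, $\beta^{-1}$ the inverse of $\beta$ on $(0,\beta(0)]$, and for $\tau\in[0,\bar\tau)$: $S^*(\tau)=\beta^{-1}\!\big(\frac{\delta}{2e^{-\delta\tau}-1}\big)$, $N^*(\tau)=(2e^{-\delta\tau}-1)e^{\delta\tau}S^*(\tau)$, $A(\tau)=\delta+\beta(S^*(\tau))$, $B(\tau)=[2\beta(S^*(\tau))+N^*(\tau)\beta'(S^*(\tau))]e^{-\delta\tau}$; these are continuously differentiable in $\tau$, and $A'$, $B'$ denote their derivatives. *)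

theory Defs
  imports "HOL-Analysis.Analysis"
begin

definition taubar :: "(real \<Rightarrow> real) \<Rightarrow> real \<Rightarrow> real" where
  "taubar \<beta> \<delta> = (1/\<delta>) * ln (2 * \<beta> 0 / (\<delta> + \<beta> 0))"

definition beta_inv :: "(real \<Rightarrow> real) \<Rightarrow> real \<Rightarrow> real" where
  "beta_inv \<beta> y = the_inv_into {0..} \<beta> y"

definition Sstar :: "(real \<Rightarrow> real) \<Rightarrow> real \<Rightarrow> real \<Rightarrow> real" where
  "Sstar \<beta> \<delta> \<tau> = beta_inv \<beta> (\<delta> / (2 * exp (-\<delta>*\<tau>) - 1))"

definition Nstar :: "(real \<Rightarrow> real) \<Rightarrow> real \<Rightarrow> real \<Rightarrow> real" where
  "Nstar \<beta> \<delta> \<tau> = (2 * exp (-\<delta>*\<tau>) - 1) * exp (\<delta>*\<tau>) * Sstar \<beta> \<delta> \<tau>"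

definition Acoef :: "(real \<Rightarrow> real) \<Rightarrow> real \<Rightarrow> real \<Rightarrow> real" where
  "Acoef \<beta> \<delta> \<tau> = \<delta> + \<beta> (Sstar \<beta> \<delta> \<tau>)"

definition Bcoef :: "(real \<Rightarrow> real) \<Rightarrow> real \<Rightarrow> real \<Rightarrow> real" where
  "Bcoef \<beta> \<delta> \<tau> = (2 * \<beta> (Sstar \<beta> \<delta> \<tau>) + Nstar \<beta> \<delta> \<tau> * deriv \<beta> (Sstar \<beta> \<delta> \<tau>))
                   * exp (-\<delta>*\<tau>)"

definition charfun :: "(real \<Rightarrow> real) \<Rightarrow> real \<Rightarrow> complex \<Rightarrow> real \<Rightarrow> complex" where
  "charfun \<beta> \<delta> l \<tau> = l + complex_of_real (Acoef \<beta> \<delta> \<tau>)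
      - complex_of_real (Bcoef \<beta> \<delta> \<tau>) * exp (- l * complex_of_real \<tau>)"

end

theory Submission
  imports Defs
begin



definition Dl :: "(real \<Rightarrow> real) \<Rightarrow> complex \<Rightarrow> real \<Rightarrow> complex" where
  "Dl B z t = 1 + of_real (B t) * of_real t * exp (- z * of_real t)"
definition Dt :: "(real \<Rightarrow> real) \<Rightarrow> (real \<Rightarrow> real) \<Rightarrow> (real \<Rightarrow> real) \<Rightarrow> complex \<Rightarrow> real \<Rightarrow> complex" where
  "Dt B Ad Bd z t = of_real (Ad t) - of_real (Bd t) * exp (- z * of_real t) + of_real (B t) * z * exp (- z * of_real t)"
definition Delta :: "(real \<Rightarrow> real) \<Rightarrow> (real \<Rightarrow> real) \<Rightarrow> complex \<Rightarrow> real \<Rightarrow> complex" where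
  "Delta A B l t = l + complex_of_real (A t) - complex_of_real (B t) * exp (- l * complex_of_real t)"

lemma Delta_vderiv:
  assumes "(A has_real_derivative Ad) (at t)" "(B has_real_derivative Bd) (at t)"
    "(lam has_vector_derivative L) (at t)"
  shows "((\<lambda>s. Delta A B (lam s) s) has_vector_derivative
     (L * (1 + of_real (B t) * of_real t * exp (- lam t * of_real t))
      + (of_real Ad - of_real Bd * exp (- lam t * of_real t) + of_real (B t) * lam t * exp (- lam t * of_real t)))) (at t)"
proof -
  have e: "((\<lambda>s. - lam s * of_real s) has_vector_derivative (- L * of_real t - lam t)) (at t)"
    by (rule has_vector_derivative_eq_rhs[OF has_vector_derivative_mult[OF has_vector_derivative_minus[OF assms(3)]
          has_vector_derivative_of_real[OF DERIV_ident[of "at t"]]]]) simp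
  have ex: "((\<lambda>s. exp (- lam s * of_real s)) has_vector_derivative ((- L * of_real t - lam t) * exp (- lam t * of_real t))) (at t)"
    using field_vector_diff_chain_at[OF e, of exp] by (simp add: o_def DERIV_exp)
  have "((\<lambda>s. lam s + of_real (A s) - of_real (B s) * exp (- lam s * of_real s)) has_vector_derivative
      (L + of_real Ad - (of_real (B t) * ((- L * of_real t - lam t) * exp (- lam t * of_real t)) + of_real Bd * exp (- lam t * of_real t)))) (at t)"
    by (intro derivative_intros assms ex has_vector_derivative_of_real)
  then show ?thesis unfolding Delta_def by (rule has_vector_derivative_eq_rhs) (simp add: algebra_simps)
qed

lemma implicit_deriv:
  assumes "(A has_real_derivative Ad) (at t)" "(B has_real_derivative Bd) (at t)"
    "(lam has_vector_derivative L) (at t)" "e > 0" "\<forall>s\<in>ball t e. Delta A B (lam s) s = 0"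
  shows "L * Dl B (lam t) t + Dt B (\<lambda>_. Ad) (\<lambda>_. Bd) (lam t) t = 0"
proof -
  have "((\<lambda>s. Delta A B (lam s) s) has_vector_derivative 0) (at t)"
    by (rule has_vector_derivative_transform_within_open[of "\<lambda>_. 0" 0 t "ball t e"])
       (use assms in auto)
  from vector_derivative_unique_at[OF Delta_vderiv[OF assms(1-3)] this]
  show ?thesis unfolding Dl_def Dt_def by simp
qed




lemma exp_im: "exp (- (\<i> * complex_of_real w) * complex_of_real t) = Complex (cos (w*t)) (- sin (w*t))"
proof -
  have "exp (- (\<i> * complex_of_real w) * complex_of_real t) = cis (-(w*t))"
    by (simp add: cis_conv_exp mult.commute mult.left_commute)
  then show ?thesis by (simp add: complex_eq_iff)
qed

lemma sign_lemma:
  fixes A B Ad Bd t w :: real and L :: complex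
  assumes t: "t > 0" and w: "w > 0" and A: "A > 0" and BA: "B < A"
    and root: "\<i> * complex_of_real w + of_real A - of_real B * exp (- (\<i> * complex_of_real w) * complex_of_real t) = 0"
    and eq: "L * (1 + of_real B * of_real t * exp (- (\<i> * complex_of_real w) * complex_of_real t))
        + (of_real Ad - of_real Bd * exp (- (\<i> * complex_of_real w) * complex_of_real t)
           + of_real B * (\<i> * complex_of_real w) * exp (- (\<i> * complex_of_real w) * complex_of_real t)) = 0"
  shows "sgn (Re L) = sgn (- (B ^ 3) - B ^ 2 * Bd * t + B * (A ^ 2 + Ad + A * Ad * t) - Bd * A)"
proof -
  define c where "c = cos (w*t)"
  define s where "s = sin (w*t)"
  define x where "x = Re L"
  define y where "y = Im L"
  have cs: "c^2 + s^2 = 1" unfolding c_def s_def by simp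
  have L: "L = Complex x y" by (simp add: x_def y_def)
  note E = exp_im[of w t, folded c_def s_def]
  from root have hc: "A = B * c" and hs: "w = - B * s"
    unfolding E by (simp_all add: complex_eq_iff)
  from eq have e1: "x * (1 + B*t*c) + y * (B * t * s) + (Ad - Bd * c + B * w * s) = 0"
    and e2: "x * (- (B * t * s)) + y * (1 + B*t*c) + (Bd * s + B * w * c) = 0"
    unfolding E L by (simp_all add: complex_eq_iff algebra_simps)
  have r1: "B*t*c = t*A" "B * t * s = - (t*w)" "B * w * s = - (w^2)" "B*w*c = w*A"
    using hc hs by (auto simp: power2_eq_square)
  have hc': "B*c = A" and hs': "B* s = - w" using hc hs by simp_all
  have hw0: "w^2 + A^2 = B^2 * (s^2 + c^2)" using hc hs by (simp add: power_mult_distrib algebra_simps)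
  have sc1: "s^2 + c^2 = 1" using cs by linarith
  have hw1: "w^2 + A^2 = B^2" using hw0 sc1 by simp
  have hw: "w^2 = B^2 - A^2" using hw1 by linarith
  have B: "B < 0"
  proof (rule ccontr)
    assume "\<not> B < 0"
    then have "B * B < A * A" using BA by (intro mult_strict_mono) auto
    moreover have "w^2 > 0" using w by simp
    ultimately show False using hw by (simp add: power2_eq_square)
  qed
  define D where "D = (1 + t*A)^2 + (t*w)^2"
  have tA: "1 + t*A > 0" using t A by (simp add: add_pos_pos)
  have Dpos: "D > 0" unfolding D_def using tA by (simp add: add_pos_nonneg)
  have key: "x * D * (-B) = - (B ^ 3) - B ^ 2 * Bd * t + B * (A ^ 2 + Ad + A * Ad * t) - Bd * A"
  proof -
    have e1': "x*(1+t*A) - y*t*w + (Ad - Bd*c - w^2) = 0"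
      using e1 unfolding r1 by (simp add: algebra_simps)
    have e2': "x*t*w + y*(1+t*A) + (Bd* s + w*A) = 0"
      using e2 unfolding r1 by (simp add: algebra_simps)
    have xd: "x * D = - ((1+t*A)*(Ad - Bd*c - w^2) + t*w*(Bd* s + w*A))"
    proof -
      have "(1+t*A) * (x*(1+t*A) - y*t*w + (Ad - Bd*c - w^2)) + t*w*(x*t*w + y*(1+t*A) + (Bd* s + w*A)) = 0"
        using e1' e2' by simp
      then show ?thesis unfolding D_def by (simp add: algebra_simps power2_eq_square)
    qed
    have "x * D * (-B) = - ((1+t*A)*(Ad - Bd*c - w^2) + t*w*(Bd* s + w*A)) * (-B)"
      using xd by simp
    also have "\<dots> = (1+t*A)*(B*Ad - Bd*(B*c) - B*w^2) + t*w*(Bd*(B* s) + w*A*B)"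
      by (simp add: algebra_simps)
    also have "\<dots> = (1+t*A)*(B*Ad - Bd*A - B*w^2) + t*(-Bd*w^2 + w^2*A*B)"
      by (simp only: hc' hs') (simp add: algebra_simps power2_eq_square)
    also have "\<dots> = - (B ^ 3) - B ^ 2 * Bd * t + B * (A ^ 2 + Ad + A * Ad * t) - Bd * A"
      unfolding hw by (simp add: algebra_simps power2_eq_square power3_eq_cube)
    finally show ?thesis .
  qed
  have "sgn (Re L) = sgn (x * D * (-B))" using Dpos B by (simp add: sgn_mult x_def)
  then show ?thesis by (simp only: key)
qed



definition C1R :: "real set \<Rightarrow> (real \<Rightarrow> real) \<Rightarrow> (real \<Rightarrow> real) \<Rightarrow> bool" where
  "C1R J f f' \<longleftrightarrow> (\<forall>x\<in>J. (f has_real_derivative f' x) (at x)) \<and> continuous_on J f'"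

lemma C1R_cont: "C1R J f f' \<Longrightarrow> continuous_on J f"
  unfolding C1R_def by (meson DERIV_isCont continuous_at_imp_continuous_on)

lemma C1R_const: "C1R J (\<lambda>_. c) (\<lambda>_. 0)"
  unfolding C1R_def by (auto intro!: derivative_eq_intros continuous_intros)

lemma C1R_id: "C1R J (\<lambda>x. x) (\<lambda>_. 1)"
  unfolding C1R_def by (auto intro!: derivative_eq_intros continuous_intros)

lemma C1R_add: "C1R J f f' \<Longrightarrow> C1R J g g' \<Longrightarrow> C1R J (\<lambda>x. f x + g x) (\<lambda>x. f' x + g' x)"
  unfolding C1R_def by (auto intro!: derivative_eq_intros continuous_intros)

lemma C1R_diff: "C1R J f f' \<Longrightarrow> C1R J g g' \<Longrightarrow> C1R J (\<lambda>x. f x - g x) (\<lambda>x. f' x - g' x)"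
  unfolding C1R_def by (auto intro!: derivative_eq_intros continuous_intros)

lemma C1R_mult: "C1R J f f' \<Longrightarrow> C1R J g g' \<Longrightarrow> C1R J (\<lambda>x. f x * g x) (\<lambda>x. f x * g' x + f' x * g x)"
proof -
  assume f: "C1R J f f'" and g: "C1R J g g'"
  have cf: "continuous_on J f" using f by (rule C1R_cont)
  have cg: "continuous_on J g" using g by (rule C1R_cont)
  show ?thesis using f g cf cg unfolding C1R_def
    by (auto intro!: derivative_eq_intros continuous_intros)
qed

lemma C1R_comp:
  assumes "C1R J f f'" "\<forall>x\<in>J. f x \<in> K" "\<forall>y\<in>K. (h has_real_derivative h' y) (at y)" "continuous_on K h'"
  shows "C1R J (\<lambda>x. h (f x)) (\<lambda>x. h' (f x) * f' x)"
proof -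
  have cf: "continuous_on J f" using assms(1) by (rule C1R_cont)
  have "continuous_on J (\<lambda>x. h' (f x))"
    using continuous_on_compose2[OF assms(4) cf] assms(2) by auto
  moreover have "(f has_real_derivative f' x) (at x)" if "x \<in> J" for x
    using assms(1) that unfolding C1R_def by auto
  moreover have "((\<lambda>x. h (f x)) has_real_derivative h' (f x) * f' x) (at x)" if "x \<in> J" for x
    using DERIV_chain2[OF _ \<open>\<And>x. x \<in> J \<Longrightarrow> (f has_real_derivative f' x) (at x)\<close>[OF that], of h "h' (f x)"] assms(2,3) that
    by auto
  moreover have "continuous_on J f'" using assms(1) unfolding C1R_def by auto
  ultimately show ?thesis unfolding C1R_def
    by (auto intro!: continuous_intros)
qed

lemma C1R_exp: "C1R J f f' \<Longrightarrow> C1R J (\<lambda>x. exp (f x)) (\<lambda>x. exp (f x) * f' x)"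
  by (rule C1R_comp[where K=UNIV]) (auto intro!: derivative_eq_intros continuous_intros)

lemma deriv_cdiv: "y \<noteq> 0 \<Longrightarrow> ((\<lambda>y. c / y) has_real_derivative (- c / y^2)) (at y)"
proof -
  assume y: "y \<noteq> 0"
  show ?thesis using DERIV_cmult[OF DERIV_inverse[OF y, where s=UNIV], of c]
    by (simp add: divide_inverse power2_eq_square)
qed

lemma C1R_cdiv: "C1R J f f' \<Longrightarrow> \<forall>x\<in>J. f x > 0 \<Longrightarrow> C1R J (\<lambda>x. c / f x) (\<lambda>x. (- c / (f x)^2) * f' x)"
proof -
  assume a: "C1R J f f'" "\<forall>x\<in>J. f x > 0"
  have d: "\<forall>y\<in>{0<..}. ((\<lambda>y. c / y) has_real_derivative (- c / y^2)) (at y)" using deriv_cdiv by auto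
  have cc: "continuous_on {0<..} (\<lambda>y::real. - c / y^2)" by (intro continuous_intros) auto
  show ?thesis using C1R_comp[OF a(1) _ d cc] a(2) by auto
qed

lemma C1R_cong:
  assumes "C1R J f f'" "open J" "\<forall>x\<in>J. g x = f x" "\<forall>x\<in>J. g' x = f' x"
  shows "C1R J g g'"
  unfolding C1R_def
proof
  show "\<forall>x\<in>J. (g has_real_derivative g' x) (at x)"
  proof
    fix x assume x: "x \<in> J"
    have "(f has_real_derivative f' x) (at x)" using assms(1) x by (simp add: C1R_def)
    then have "(g has_real_derivative f' x) (at x)"
      by (rule has_field_derivative_transform_within_open[OF _ assms(2) x]) (use assms(3) in simp)
    then show "(g has_real_derivative g' x) (at x)" using assms(4) x by simp
  qed
  show "continuous_on J g'"
    using assms(1) assms(4) continuous_on_cong unfolding C1R_def by force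
qed




lemma Delta_has_derivative:
  assumes "(A has_real_derivative Ad (snd p)) (at (snd p))" "(B has_real_derivative Bd (snd p)) (at (snd p))"
  shows "((\<lambda>p. Delta A B (fst p) (snd p)) has_derivative
     (\<lambda>v. Dl B (fst p) (snd p) * fst v + of_real (snd v) * Dt B Ad Bd (fst p) (snd p))) (at p)"
proof -
  have dA: "((\<lambda>q. A (snd q)) has_derivative (\<lambda>v. Ad (snd p) * snd v)) (at p)"
    using has_derivative_compose[OF has_derivative_snd[OF has_derivative_ident] assms(1)[unfolded has_field_derivative_def]]
    by simp
  have dB: "((\<lambda>q. B (snd q)) has_derivative (\<lambda>v. Bd (snd p) * snd v)) (at p)"
    using has_derivative_compose[OF has_derivative_snd[OF has_derivative_ident] assms(2)[unfolded has_field_derivative_def]]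
    by simp
  have dI: "((\<lambda>q. - fst q * complex_of_real (snd q)) has_derivative
      (\<lambda>v. - fst p * complex_of_real (snd v) + - fst v * complex_of_real (snd p))) (at p)"
    by (rule derivative_eq_intros refl)+
  have dE: "((\<lambda>q. exp (- fst q * complex_of_real (snd q))) has_derivative
      (\<lambda>v. (- fst p * complex_of_real (snd v) + - fst v * complex_of_real (snd p)) * exp (- fst p * complex_of_real (snd p)))) (at p)"
    using has_derivative_compose[OF dI DERIV_exp[unfolded has_field_derivative_def]]
    by (simp add: mult.commute)
  have dA': "((\<lambda>q. complex_of_real (A (snd q))) has_derivative (\<lambda>v. complex_of_real (Ad (snd p) * snd v))) (at p)"
    using dA by (rule has_derivative_of_real)
  have dB': "((\<lambda>q. complex_of_real (B (snd q))) has_derivative (\<lambda>v. complex_of_real (Bd (snd p) * snd v))) (at p)"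
    using dB by (rule has_derivative_of_real)
  have "((\<lambda>p. fst p + complex_of_real (A (snd p)) - complex_of_real (B (snd p)) * exp (- fst p * complex_of_real (snd p))) has_derivative
     (\<lambda>v. fst v + complex_of_real (Ad (snd p) * snd v) - (complex_of_real (B (snd p)) * ((- fst p * complex_of_real (snd v) + - fst v * complex_of_real (snd p)) * exp (- fst p * complex_of_real (snd p))) + complex_of_real (Bd (snd p) * snd v) * exp (- fst p * complex_of_real (snd p))))) (at p)"
    by (intro has_derivative_diff has_derivative_add has_derivative_mult dA' dB' dE has_derivative_fst[OF has_derivative_ident])
  then show ?thesis unfolding Delta_def Dl_def Dt_def
    by (rule has_derivative_eq_rhs) (simp add: fun_eq_iff algebra_simps)
qed

lemma branch:
  fixes A B Ad Bd :: "real \<Rightarrow> real" and T :: "real set" and z0 :: complex and tc :: real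
  assumes T: "open T" "tc \<in> T"
    and dA: "\<forall>t\<in>T. (A has_real_derivative Ad t) (at t)"
    and dB: "\<forall>t\<in>T. (B has_real_derivative Bd t) (at t)"
    and cAd: "continuous_on T Ad" and cBd: "continuous_on T Bd"
    and root: "Delta A B z0 tc = 0" and nz: "Dl B z0 tc \<noteq> 0"
  shows "\<exists>e>0. \<exists>lam. lam tc = z0 \<and> lam C1_differentiable_on ball tc e
            \<and> (\<forall>t\<in>ball tc e. Delta A B (lam t) t = 0)"
proof -
  define U :: "(complex \<times> real) set" where "U = UNIV \<times> T"
  define F where "F = (\<lambda>p::complex\<times>real. (Delta A B (fst p) (snd p), snd p))"
  define a where "a = (\<lambda>p::complex\<times>real. Dl B (fst p) (snd p))"
  define b where "b = (\<lambda>p::complex\<times>real. Dt B Ad Bd (fst p) (snd p))"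
  define Lf where "Lf = (\<lambda>p (v::complex\<times>real). (a p * fst v + of_real (snd v) * b p, snd v))"
  have blo: "bounded_linear (\<lambda>x::complex\<times>real. complex_of_real (snd x))"
    by (rule bounded_linear_compose[OF bounded_linear_of_real bounded_linear_snd])
  have bl: "bounded_linear (Lf p)" for p unfolding Lf_def by (auto intro!: bounded_linear_intros blo)
  define F' where "F' = (\<lambda>p. Blinfun (Lf p))"
  have F'a: "blinfun_apply (F' p) = Lf p" for p unfolding F'_def using bl by (rule bounded_linear_Blinfun_apply)
  have openU: "open U" unfolding U_def using T by (simp add: open_Times)
  have derF: "(F has_derivative blinfun_apply (F' p)) (at p)" if "p \<in> U" for p
  proof -
    from that have "snd p \<in> T" by (auto simp: U_def)
    then have "((\<lambda>p. Delta A B (fst p) (snd p)) has_derivative (\<lambda>v. a p * fst v + of_real (snd v) * b p)) (at p)"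
      unfolding a_def b_def using dA dB by (intro Delta_has_derivative) auto
    then show ?thesis unfolding F'a Lf_def F_def
      by (auto intro!: has_derivative_Pair derivative_intros)
  qed
  have cB: "continuous_on T B" using dB by (meson DERIV_isCont continuous_at_imp_continuous_on)
  have c_snd: "continuous_on U (\<lambda>p. f (snd p))" if "continuous_on T f" for f :: "real \<Rightarrow> real"
    by (rule continuous_on_compose2[OF that continuous_on_snd[OF continuous_on_id]]) (auto simp: U_def)
  have ca: "continuous_on U a" unfolding a_def Dl_def
    by (intro continuous_intros c_snd cB)
  have cb: "continuous_on U b" unfolding b_def Dt_def
    by (intro continuous_intros c_snd cB cAd cBd)
  have contF': "continuous_on U F'"
    unfolding continuous_on_def
  proof (intro ballI)
    fix p assume p: "p \<in> U"
    have bound: "norm (F' q - F' p) \<le> norm (a q - a p) + norm (b q - b p)" for q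
    proof (rule norm_blinfun_bound)
      show "0 \<le> norm (a q - a p) + norm (b q - b p)" by simp
      fix v :: "complex \<times> real"
      have "blinfun_apply (F' q - F' p) v = ((a q - a p) * fst v + of_real (snd v) * (b q - b p), 0)"
        by (simp add: blinfun.diff_left F'a Lf_def algebra_simps)
      then have "norm (blinfun_apply (F' q - F' p) v) = norm ((a q - a p) * fst v + of_real (snd v) * (b q - b p))"
        by (simp add: norm_Pair)
      also have "\<dots> \<le> norm (a q - a p) * norm (fst v) + norm (snd v) * norm (b q - b p)"
        by (rule order_trans[OF norm_triangle_ineq]) (simp add: norm_mult)
      also have "\<dots> \<le> norm (a q - a p) * norm v + norm v * norm (b q - b p)"
      proof -
        have "norm (fst v) \<le> norm v" "norm (snd v) \<le> norm v"
          by (metis prod.collapse norm_fst_le, metis prod.collapse norm_snd_le)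
        then show ?thesis by (intro add_mono mult_mono) auto
      qed
      finally show "norm (blinfun_apply (F' q - F' p) v) \<le> (norm (a q - a p) + norm (b q - b p)) * norm v"
        by (simp add: algebra_simps)
    qed
    have "((\<lambda>q. norm (a q - a p) + norm (b q - b p)) \<longlongrightarrow> 0) (at p within U)"
    proof -
      have "(a \<longlongrightarrow> a p) (at p within U)" "(b \<longlongrightarrow> b p) (at p within U)"
        using ca cb p by (auto simp: continuous_on_def)
      then have "((\<lambda>q. a q - a p) \<longlongrightarrow> 0) (at p within U)" "((\<lambda>q. b q - b p) \<longlongrightarrow> 0) (at p within U)"
        by (simp_all add: LIM_zero_iff)
      then show ?thesis using tendsto_add_zero tendsto_norm_zero by blast
    qed
    then have "((\<lambda>q. F' q - F' p) \<longlongrightarrow> 0) (at p within U)"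
      by (rule Lim_null_comparison[rotated]) (simp add: bound)
    then show "(F' \<longlongrightarrow> F' p) (at p within U)" by (simp add: LIM_zero_iff)
  qed
  define x0 where "x0 = (z0, tc)"
  have x0U: "x0 \<in> U" using T by (simp add: x0_def U_def)
  have a0: "a x0 \<noteq> 0" using nz by (simp add: a_def x0_def)
  define Li where "Li = (\<lambda>v::complex\<times>real. ((fst v - of_real (snd v) * b x0) / a x0, snd v))"
  have bl1: "bounded_linear (\<lambda>x::complex\<times>real. fst x - of_real (snd x) * b x0)"
    by (auto intro!: bounded_linear_intros blo)
  have bli: "bounded_linear Li" unfolding Li_def
    by (intro bounded_linear_Pair bounded_linear_compose[OF bounded_linear_divide bl1] bounded_linear_snd)
  define invf where "invf = Blinfun Li"
  have invfa: "blinfun_apply invf = Li" unfolding invf_def by (rule bounded_linear_Blinfun_apply[OF bli])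
  have invf: "invf o\<^sub>L F' x0 = id_blinfun"
    by (rule blinfun_eqI) (simp add: invfa F'a Lf_def Li_def a0)
  obtain U' V g g' where "open U'" "U' \<subseteq> U" "x0 \<in> U'" "open V" "F x0 \<in> V" and hom: "homeomorphism U' V F g"
    and derg: "\<And>y. y \<in> V \<Longrightarrow> (g has_derivative (g' y)) (at y)"
    and g'eq: "\<And>y. y \<in> V \<Longrightarrow> g' y = inv (blinfun_apply (F'(g y)))"
    and bij: "\<And>y. y \<in> V \<Longrightarrow> bij (blinfun_apply (F'(g y)))"
    apply (rule inverse_function_theorem[OF openU derF contF' x0U invf])
     apply assumption
    subgoal premises prems by (rule prems(1)[OF prems(2-10)])
    done
  have Fx0: "F x0 = (0, tc)" using root by (simp add: F_def x0_def)
  obtain e where e: "e > 0" "ball (0, tc) e \<subseteq> V"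
    using \<open>open V\<close> \<open>F x0 \<in> V\<close> Fx0 open_contains_ball by force
  have inV: "(0, t) \<in> V" if "t \<in> ball tc e" for t
  proof -
    have "dist (0::complex, t) (0, tc) = dist t tc" by (simp add: dist_Pair_Pair)
    then show ?thesis using e that by (auto simp: dist_commute)
  qed
  have gF: "g (F x) = x" if "x \<in> U'" for x using hom that by (simp add: homeomorphism_def)
  have Fg: "F (g y) = y" "g y \<in> U'" if "y \<in> V" for y using hom that by (auto simp: homeomorphism_def)
  define lam where "lam = (\<lambda>t. fst (g (0::complex, t)))"
  have snd_g: "snd (g (0, t)) = t" if "t \<in> ball tc e" for t
    using Fg(1)[OF inV[OF that]] by (simp add: F_def)
  have g_eq: "g (0, t) = (lam t, t)" if "t \<in> ball tc e" for t
    using snd_g[OF that] by (simp add: lam_def prod_eq_iff)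
  have zero: "Delta A B (lam t) t = 0" if "t \<in> ball tc e" for t
    using Fg(1)[OF inV[OF that]] g_eq[OF that] by (simp add: F_def)
  have inT: "t \<in> T" if "t \<in> ball tc e" for t
    using Fg(2)[OF inV[OF that]] g_eq[OF that] \<open>U' \<subseteq> U\<close> by (auto simp: U_def)
  have lam0: "lam tc = z0"
    using gF[OF \<open>x0 \<in> U'\<close>] Fx0 by (simp add: lam_def x0_def)
  have diff: "lam differentiable (at t)" if "t \<in> ball tc e" for t
  proof -
    have "((\<lambda>s. (0::complex, s)) has_derivative (\<lambda>k. (0, k))) (at t)"
      by (auto intro!: derivative_eq_intros has_derivative_Pair)
    from has_derivative_compose[OF this derg[OF inV[OF that]]]
    have "((\<lambda>s. g (0, s)) has_derivative (\<lambda>k. g' (0, t) (0, k))) (at t)" .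
    then have "(lam has_derivative (\<lambda>k. fst (g' (0, t) (0, k)))) (at t)"
      unfolding lam_def by (rule has_derivative_fst)
    then show ?thesis by (auto simp: differentiable_def)
  qed
  have Dlnz: "Dl B (lam t) t \<noteq> 0" if "t \<in> ball tc e" for t
  proof
    assume h: "Dl B (lam t) t = 0"
    have "a (g (0, t)) = 0" using h g_eq[OF that] by (simp add: a_def)
    then have "blinfun_apply (F' (g (0, t))) (1, 0) = blinfun_apply (F' (g (0, t))) (0, 0)"
      by (simp add: F'a Lf_def)
    moreover have "inj (blinfun_apply (F' (g (0, t))))" using bij[OF inV[OF that]] by (rule bij_is_inj)
    ultimately have "(1::complex, 0::real) = (0, 0)" by (blast dest: injD)
    then show False by simp
  qed
  define D where "D = (\<lambda>t. - Dt B Ad Bd (lam t) t / Dl B (lam t) t)"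
  have vd: "(lam has_vector_derivative D t) (at t)" if t: "t \<in> ball tc e" for t
  proof -
    have L: "(lam has_vector_derivative vector_derivative lam (at t)) (at t)"
      using diff[OF t] by (simp add: vector_derivative_works)
    obtain r where r: "r > 0" "ball t r \<subseteq> ball tc e" using t open_ball[of tc e] open_contains_ball by blast
    have "vector_derivative lam (at t) * Dl B (lam t) t + Dt B (\<lambda>_. Ad t) (\<lambda>_. Bd t) (lam t) t = 0"
      by (rule implicit_deriv[OF _ _ L r(1)]) (use dA dB inT[OF t] zero r in auto)
    then have "vector_derivative lam (at t) = D t"
      using Dlnz[OF t] unfolding D_def Dt_def by (simp add: field_simps eq_neg_iff_add_eq_0)
    with L show ?thesis by simp
  qed
  have clam: "continuous_on (ball tc e) lam"
    using diff by (meson differentiable_imp_continuous_within continuous_at_imp_continuous_on)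
  have sub: "ball tc e \<subseteq> T" using inT by auto
  have cD: "continuous_on (ball tc e) D"
    unfolding D_def Dt_def Dl_def
    using Dlnz unfolding Dl_def
    by (intro continuous_intros clam continuous_on_subset[OF cAd sub] continuous_on_subset[OF cBd sub]
        continuous_on_subset[OF cB sub]) auto
  show ?thesis
    using e(1) lam0 vd cD zero unfolding C1_differentiable_on_def by blast
qed




lemma beta_facts:
  fixes \<beta> d\<beta> :: "real \<Rightarrow> real"
  assumes beta_d1: "\<forall>s\<ge>0. (\<beta> has_real_derivative d\<beta> s) (at s within {0..})"
    and beta_strict_dec: "\<forall>x y. 0 \<le> x \<longrightarrow> x < y \<longrightarrow> \<beta> y < \<beta> x"
    and beta_lim: "(\<beta> \<longlongrightarrow> 0) at_top"
    and y: "0 < y" "y < \<beta> 0"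
  shows "beta_inv \<beta> y > 0 \<and> \<beta> (beta_inv \<beta> y) = y"
proof -
  have cont: "continuous_on {0..} \<beta>"
    using beta_d1 by (auto simp: continuous_on_eq_continuous_within intro: DERIV_continuous)
  have inj: "inj_on \<beta> {0..}"
  proof (rule inj_onI)
    fix x z assume "x \<in> {0..}" "z \<in> {0..}" "\<beta> x = \<beta> z"
    then show "x = z"
    proof (cases x z rule: linorder_cases)
      case less then show ?thesis using beta_strict_dec \<open>x \<in> {0..}\<close> \<open>\<beta> x = \<beta> z\<close> by force
    next
      case greater then show ?thesis using beta_strict_dec \<open>z \<in> {0..}\<close> \<open>\<beta> x = \<beta> z\<close> by force
    qed
  qed
  from beta_lim y(1) have "eventually (\<lambda>x. \<beta> x < y) at_top"
    by (rule order_tendstoD)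
  then obtain M where M: "\<And>x. x \<ge> M \<Longrightarrow> \<beta> x < y" by (auto simp: eventually_at_top_linorder)
  define M' where "M' = max M 1"
  have "\<exists>s. 0 \<le> s \<and> s \<le> M' \<and> \<beta> s = y"
    by (rule IVT2') (use M y cont in \<open>auto simp: M'_def intro: less_imp_le continuous_on_subset\<close>)
  then obtain s where s: "0 \<le> s" "\<beta> s = y" by auto
  have "s \<noteq> 0" using s y by auto
  with s have "s > 0" by simp
  moreover have "beta_inv \<beta> y = s"
    unfolding beta_inv_def using inj s by (intro the_inv_into_f_eq) auto
  ultimately show ?thesis using s by simp
qed

lemma beta_inv_beta:
  fixes \<beta> :: "real \<Rightarrow> real"
  assumes beta_strict_dec: "\<forall>x y. 0 \<le> x \<longrightarrow> x < y \<longrightarrow> \<beta> y < \<beta> x" and "s \<ge> 0"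
  shows "beta_inv \<beta> (\<beta> s) = s"
proof -
  have inj: "inj_on \<beta> {0..}"
  proof (rule inj_onI)
    fix x z assume "x \<in> {0..}" "z \<in> {0..}" "\<beta> x = \<beta> z"
    then show "x = z"
    proof (cases x z rule: linorder_cases)
      case less then show ?thesis using beta_strict_dec \<open>x \<in> {0..}\<close> \<open>\<beta> x = \<beta> z\<close> by force
    next
      case greater then show ?thesis using beta_strict_dec \<open>z \<in> {0..}\<close> \<open>\<beta> x = \<beta> z\<close> by force
    qed
  qed
  show ?thesis unfolding beta_inv_def using inj assms(2) by (intro the_inv_into_f_f) auto
qed

lemma at_pos: "s > (0::real) \<Longrightarrow> at s within {0..} = at s"
proof (rule at_within_interior)
  assume "s > 0"
  have "{0<..} \<subseteq> interior {0::real..}" by (rule interior_maximal) auto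
  then show "s \<in> interior {0..}" using \<open>s > 0\<close> by auto
qed




theorem proposition5p1:
  fixes \<beta> d\<beta> dd\<beta> :: "real \<Rightarrow> real" and \<delta> \<tau>c \<omega> :: real
  assumes delta_pos: "\<delta> > 0"
    and beta_pos: "\<forall>s\<ge>0. \<beta> s > 0"
    and beta_d1: "\<forall>s\<ge>0. (\<beta> has_real_derivative d\<beta> s) (at s within {0..})"
    and beta_d2: "\<forall>s\<ge>0. (d\<beta> has_real_derivative dd\<beta> s) (at s within {0..})"
    and beta_d2_cont: "continuous_on {0..} dd\<beta>"
    and beta_strict_dec: "\<forall>x y. 0 \<le> x \<longrightarrow> x < y \<longrightarrow> \<beta> y < \<beta> x"
    and beta_d1_neg: "\<forall>s>0. d\<beta> s < 0"
    and beta_lim: "(\<beta> \<longlongrightarrow> 0) at_top"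
    and delta_lt: "\<delta> < \<beta> 0"
    and tau_c: "0 < \<tau>c" "\<tau>c < taubar \<beta> \<delta>"
    and omega_pos: "\<omega> > 0"
    and root_pos: "charfun \<beta> \<delta> (\<i> * complex_of_real \<omega>) \<tau>c = 0"
    and root_neg: "charfun \<beta> \<delta> (- \<i> * complex_of_real \<omega>) \<tau>c = 0"
  shows
    "deriv (\<lambda>l. charfun \<beta> \<delta> l \<tau>c) (\<i> * complex_of_real \<omega>) \<noteq> 0
     \<and> deriv (\<lambda>l. charfun \<beta> \<delta> l \<tau>c) (- \<i> * complex_of_real \<omega>) \<noteq> 0
     \<and> (\<exists>\<epsilon>>0. \<exists>lam :: real \<Rightarrow> complex.
          lam \<tau>c = \<i> * complex_of_real \<omega>
          \<and> lam C1_differentiable_on ball \<tau>c \<epsilon>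
          \<and> (\<forall>\<tau>\<in>ball \<tau>c \<epsilon>. charfun \<beta> \<delta> (lam \<tau>) \<tau> = 0))
     \<and> (\<forall>\<epsilon> (lam :: real \<Rightarrow> complex). \<epsilon> > 0
          \<longrightarrow> lam \<tau>c = \<i> * complex_of_real \<omega>
          \<longrightarrow> lam differentiable (at \<tau>c)
          \<longrightarrow> (\<forall>\<tau>\<in>ball \<tau>c \<epsilon>. charfun \<beta> \<delta> (lam \<tau>) \<tau> = 0)
          \<longrightarrow> sgn (Re (vector_derivative lam (at \<tau>c)))
              = sgn (- ((Bcoef \<beta> \<delta> \<tau>c) ^ 3)
                     - (Bcoef \<beta> \<delta> \<tau>c) ^ 2 * deriv (Bcoef \<beta> \<delta>) \<tau>c * \<tau>c
                     + Bcoef \<beta> \<delta> \<tau>c * ((Acoef \<beta> \<delta> \<tau>c) ^ 2 + deriv (Acoef \<beta> \<delta>) \<tau>c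
                          + Acoef \<beta> \<delta> \<tau>c * deriv (Acoef \<beta> \<delta>) \<tau>c * \<tau>c)
                     - deriv (Bcoef \<beta> \<delta>) \<tau>c * Acoef \<beta> \<delta> \<tau>c))"
proof -
  define q where "q = (\<lambda>\<tau>::real. 2 * exp (- \<delta> * \<tau>) - 1)"
  define y where "y = (\<lambda>\<tau>. \<delta> / q \<tau>)"
  define tb where "tb = taubar \<beta> \<delta>"
  define J where "J = {0<..<tb}"
  define G where "G = beta_inv \<beta>"
  define K where "K = {0<..<\<beta> 0}"
  have openJ: "open J" by (simp add: J_def)
  have tcJ: "\<tau>c \<in> J" using tau_c by (simp add: J_def tb_def)
  have b0: "\<beta> 0 > 0" using delta_pos delta_lt by linarith
  have qb: "q \<tau> > \<delta> / \<beta> 0 \<and> q \<tau> < 1" if "\<tau> \<in> J" for \<tau>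
  proof -
    from that have t0: "0 < \<tau>" and t1: "\<tau> < tb" by (auto simp: J_def)
    define r where "r = 2 * \<beta> 0 / (\<delta> + \<beta> 0)"
    have r0: "r > 0" using b0 delta_pos by (simp add: r_def)
    have "\<tau> < ln r / \<delta>" using t1 unfolding tb_def taubar_def r_def by simp
    then have "\<delta> * \<tau> < ln r" using delta_pos by (simp add: pos_less_divide_eq mult.commute)
    then have "exp (\<delta> * \<tau>) < exp (ln r)" by simp
    then have Er: "exp (\<delta> * \<tau>) < r" using r0 by simp
    have dpb: "\<delta> + \<beta> 0 > 0" using delta_pos b0 by simp
    have "(\<delta> + \<beta> 0) * exp (\<delta> * \<tau>) < 2 * \<beta> 0"
      using Er dpb by (simp add: r_def pos_less_divide_eq mult.commute)
    then have lt: "(\<delta> + \<beta> 0) * exp (\<delta> * \<tau>) * exp (- \<delta> * \<tau>) < 2 * \<beta> 0 * exp (- \<delta> * \<tau>)"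
      by (rule mult_strict_right_mono) simp
    have EE: "exp (\<delta> * \<tau>) * exp (- \<delta> * \<tau>) = 1" by (simp flip: exp_add)
    have "\<delta> + \<beta> 0 = (\<delta> + \<beta> 0) * (exp (\<delta> * \<tau>) * exp (- \<delta> * \<tau>))" by (simp only: EE mult_1_right)
    also have "\<dots> < 2 * \<beta> 0 * exp (- \<delta> * \<tau>)" using lt by (simp only: mult.assoc)
    finally have h: "\<delta> + \<beta> 0 < 2 * \<beta> 0 * exp (- \<delta> * \<tau>)" .
    have "\<delta> < (2 * exp (- \<delta> * \<tau>) - 1) * \<beta> 0" using h by (simp add: algebra_simps)
    then have "\<delta> / \<beta> 0 < q \<tau>"
      using b0 by (simp add: q_def divide_less_eq)
    moreover have "exp (- \<delta> * \<tau>) < 1" using delta_pos t0 by simp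
    ultimately show ?thesis by (simp add: q_def)
  qed
  have qpos: "q \<tau> > 0" if "\<tau> \<in> J" for \<tau>
    using qb[OF that] delta_pos b0 by (smt (z3) divide_pos_pos)
  have yb: "y \<tau> > \<delta> \<and> y \<tau> < \<beta> 0" if "\<tau> \<in> J" for \<tau>
  proof -
    have q1: "q \<tau> < 1" "q \<tau> > \<delta> / \<beta> 0" "q \<tau> > 0" using qb[OF that] qpos[OF that] by auto
    have "\<delta> < \<delta> / q \<tau>" using q1 delta_pos by (simp add: less_divide_eq)
    moreover have "\<delta> < q \<tau> * \<beta> 0" using q1(2) b0 by (simp add: divide_less_eq)
    then have "\<delta> / q \<tau> < \<beta> 0" using q1(3) by (simp add: divide_less_eq mult.commute)
    ultimately show ?thesis by (simp add: y_def)
  qed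
  have yK: "0 < y \<tau> \<and> y \<tau> < \<beta> 0" if "\<tau> \<in> J" for \<tau>
    using yb[OF that] delta_pos by linarith
  have Gy: "G v > 0 \<and> \<beta> (G v) = v" if "0 < v" "v < \<beta> 0" for v
    unfolding G_def by (rule beta_facts[OF beta_d1 beta_strict_dec beta_lim that])
  have GB: "G (\<beta> s) = s" if "s \<ge> 0" for s
    unfolding G_def by (rule beta_inv_beta[OF beta_strict_dec that])
  have dbeta_at: "(\<beta> has_real_derivative d\<beta> s) (at s)" if "s > 0" for s
  proof -
    have "(\<beta> has_real_derivative d\<beta> s) (at s within {0..})" using beta_d1 that by simp
    then show ?thesis by (simp add: at_pos[OF that])
  qed
  have ddbeta_at: "(d\<beta> has_real_derivative dd\<beta> s) (at s)" if "s > 0" for s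
  proof -
    have "(d\<beta> has_real_derivative dd\<beta> s) (at s within {0..})" using beta_d2 that by simp
    then show ?thesis by (simp add: at_pos[OF that])
  qed
  have cdb: "continuous_on {0<..} d\<beta>"
    using dbeta_at ddbeta_at by (meson DERIV_isCont continuous_at_imp_continuous_on greaterThan_iff)
  have cddb: "continuous_on {0<..} dd\<beta>"
    using beta_d2_cont by (rule continuous_on_subset) auto
  have Gd: "(G has_real_derivative inverse (d\<beta> (G v))) (at v)" if "v \<in> K" for v
  proof -
    from that have v: "0 < v" "v < \<beta> 0" by (auto simp: K_def)
    have s: "G v > 0" "\<beta> (G v) = v" using Gy[OF v] by auto
    have "isCont G (\<beta> (G v))"
    proof (rule isCont_inverse_function2[of "G v / 2" "G v" "G v + 1"])
      show "G v / 2 < G v" "G v < G v + 1" using s by auto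
      show "G (\<beta> z) = z" if "G v / 2 \<le> z" "z \<le> G v + 1" for z using that s GB by auto
      show "isCont \<beta> z" if "G v / 2 \<le> z" "z \<le> G v + 1" for z
        using that s dbeta_at[of z] by (auto intro: DERIV_isCont)
    qed
    then have cG: "isCont G v" using s by simp
    have "\<forall>u. 0 < u \<and> u < \<beta> 0 \<longrightarrow> \<beta> (G u) = u" using Gy by auto
    then show ?thesis
      using DERIV_inverse_function[OF dbeta_at[OF s(1)] _ v(1) v(2) _ cG] beta_d1_neg s(1) by auto
  qed
  have cG: "continuous_on K G" using Gd by (meson DERIV_isCont continuous_at_imp_continuous_on)
  have GK: "G v > 0" if "v \<in> K" for v using Gy that by (auto simp: K_def)
  have cGd: "continuous_on K (\<lambda>v. inverse (d\<beta> (G v)))"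
  proof (rule continuous_on_inverse)
    show "continuous_on K (\<lambda>v. d\<beta> (G v))"
      by (rule continuous_on_compose2[OF cdb cG]) (use GK in auto)
    show "\<forall>v\<in>K. d\<beta> (G v) \<noteq> 0" using GK beta_d1_neg by (metis less_irrefl)
  qed
  obtain qd where q1: "C1R J q qd"
    unfolding q_def
    using C1R_diff[OF C1R_mult[OF C1R_const C1R_exp[OF C1R_mult[OF C1R_const C1R_id]]] C1R_const]
    by blast
  obtain yd where y1: "C1R J y yd"
    unfolding y_def using C1R_cdiv[OF q1] qpos by blast
  obtain Sd where S1: "C1R J (\<lambda>\<tau>. G (y \<tau>)) Sd"
  proof -
    have "C1R J (\<lambda>\<tau>. G (y \<tau>)) (\<lambda>x. inverse (d\<beta> (G (y x))) * yd x)"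
      by (rule C1R_comp[OF y1 _ _ cGd]) (use yK Gd in \<open>auto simp: K_def\<close>)
    then show ?thesis using that by blast
  qed
  obtain dSd where dS1: "C1R J (\<lambda>\<tau>. d\<beta> (G (y \<tau>))) dSd"
  proof -
    have "C1R J (\<lambda>\<tau>. d\<beta> (G (y \<tau>))) (\<lambda>x. dd\<beta> (G (y x)) * Sd x)"
      by (rule C1R_comp[OF S1 _ _ cddb]) (use yK Gy ddbeta_at in \<open>auto\<close>)
    then show ?thesis using that by blast
  qed
  obtain ed where e1: "C1R J (\<lambda>x. exp (\<delta> * x)) ed"
    using C1R_exp[OF C1R_mult[OF C1R_const C1R_id]] by blast
  obtain emd where em1: "C1R J (\<lambda>x. exp (- \<delta> * x)) emd"
    using C1R_exp[OF C1R_mult[OF C1R_const C1R_id]] by blast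
  obtain Ad0 where A1: "C1R J (\<lambda>\<tau>. \<delta> + y \<tau>) Ad0"
    using C1R_add[OF C1R_const y1] by blast
  obtain Bd0 where B1: "C1R J (\<lambda>\<tau>. (2 * y \<tau> + q \<tau> * exp (\<delta> * \<tau>) * G (y \<tau>) * d\<beta> (G (y \<tau>))) * exp (- \<delta> * \<tau>)) Bd0"
    using C1R_mult[OF C1R_add[OF C1R_mult[OF C1R_const y1] C1R_mult[OF C1R_mult[OF C1R_mult[OF q1 e1] S1] dS1]] em1]
    by blast
  have Sstar_eq: "Sstar \<beta> \<delta> \<tau> = G (y \<tau>)" for \<tau>
    by (simp add: Sstar_def G_def y_def q_def)
  have Aeq: "\<forall>\<tau>\<in>J. Acoef \<beta> \<delta> \<tau> = \<delta> + y \<tau>"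
    using yK Gy by (auto simp: Acoef_def Sstar_eq)
  have Beq: "\<forall>\<tau>\<in>J. Bcoef \<beta> \<delta> \<tau> = (2 * y \<tau> + q \<tau> * exp (\<delta> * \<tau>) * G (y \<tau>) * d\<beta> (G (y \<tau>))) * exp (- \<delta> * \<tau>)"
  proof
    fix \<tau> assume t: "\<tau> \<in> J"
    have g: "G (y \<tau>) > 0" "\<beta> (G (y \<tau>)) = y \<tau>" using yb[OF t] delta_pos Gy by auto
    have "deriv \<beta> (G (y \<tau>)) = d\<beta> (G (y \<tau>))" using dbeta_at[OF g(1)] by (rule DERIV_imp_deriv)
    then show "Bcoef \<beta> \<delta> \<tau> = (2 * y \<tau> + q \<tau> * exp (\<delta> * \<tau>) * G (y \<tau>) * d\<beta> (G (y \<tau>))) * exp (- \<delta> * \<tau>)"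
      using g by (simp add: Bcoef_def Nstar_def Sstar_eq q_def)
  qed
  have A2: "C1R J (Acoef \<beta> \<delta>) Ad0" by (rule C1R_cong[OF A1 openJ Aeq]) simp
  have B2: "C1R J (Bcoef \<beta> \<delta>) Bd0" by (rule C1R_cong[OF B1 openJ Beq]) simp
  have dA: "\<forall>t\<in>J. (Acoef \<beta> \<delta> has_real_derivative Ad0 t) (at t)" and cAd: "continuous_on J Ad0"
    using A2 by (auto simp: C1R_def)
  have dB: "\<forall>t\<in>J. (Bcoef \<beta> \<delta> has_real_derivative Bd0 t) (at t)" and cBd: "continuous_on J Bd0"
    using B2 by (auto simp: C1R_def)
  have dAc: "deriv (Acoef \<beta> \<delta>) \<tau>c = Ad0 \<tau>c" using dA tcJ by (simp add: DERIV_imp_deriv)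
  have dBc: "deriv (Bcoef \<beta> \<delta>) \<tau>c = Bd0 \<tau>c" using dB tcJ by (simp add: DERIV_imp_deriv)
  define A0 where "A0 = Acoef \<beta> \<delta> \<tau>c"
  define B0 where "B0 = Bcoef \<beta> \<delta> \<tau>c"
  have A0pos: "A0 > 0" using Aeq tcJ yb[OF tcJ] delta_pos by (simp add: A0_def)
  have B0A0: "B0 < A0"
  proof -
    define E where "E = exp (- \<delta> * \<tau>c)"
    define E' where "E' = exp (\<delta> * \<tau>c)"
    define S where "S = G (y \<tau>c)"
    have EE: "E' * E = 1" by (simp add: E_def E'_def flip: exp_add)
    have qE: "q \<tau>c = 2 * E - 1" by (simp add: q_def E_def)
    have qp: "q \<tau>c > 0" using qpos[OF tcJ] .
    have Sp: "S > 0" using yb[OF tcJ] delta_pos Gy by (auto simp: S_def)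
    have neg: "q \<tau>c * S * d\<beta> S < 0"
      using qp Sp beta_d1_neg by (simp add: mult_pos_neg)
    have "B0 = 2 * y \<tau>c * E + q \<tau>c * S * d\<beta> S * (E' * E)"
      using Beq tcJ by (simp add: B0_def E_def E'_def S_def algebra_simps)
    also have "\<dots> = 2 * y \<tau>c * E + q \<tau>c * S * d\<beta> S" by (simp add: EE)
    also have "2 * y \<tau>c * E = A0"
    proof -
      have "2 * y \<tau>c * E = \<delta> * (q \<tau>c + 1) / q \<tau>c" by (simp add: y_def qE)
      also have "\<dots> = \<delta> + \<delta> / q \<tau>c" using qp by (simp add: field_simps)
      finally show ?thesis using Aeq tcJ by (simp add: A0_def y_def)
    qed
    finally show ?thesis using neg by simp
  qed
  have charfun_Delta: "charfun \<beta> \<delta> = Delta (Acoef \<beta> \<delta>) (Bcoef \<beta> \<delta>)"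
    by (simp add: fun_eq_iff charfun_def Delta_def)
  have derivc: "deriv (\<lambda>l. charfun \<beta> \<delta> l \<tau>c) z = Dl (Bcoef \<beta> \<delta>) z \<tau>c" for z
  proof -
    have "((\<lambda>l. charfun \<beta> \<delta> l \<tau>c) has_field_derivative Dl (Bcoef \<beta> \<delta>) z \<tau>c) (at z)"
      unfolding charfun_def Dl_def
      by (rule derivative_eq_intros refl)+ (simp add: algebra_simps)
    then show ?thesis by (rule DERIV_imp_deriv)
  qed
  have Dlnz: "Dl (Bcoef \<beta> \<delta>) z \<tau>c \<noteq> 0" if "charfun \<beta> \<delta> z \<tau>c = 0" "Im z \<noteq> 0" for z
  proof -
    have "complex_of_real B0 * exp (- z * complex_of_real \<tau>c) = z + complex_of_real A0"
      using that(1) by (simp add: charfun_def A0_def B0_def algebra_simps)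
    then have eqD: "Dl (Bcoef \<beta> \<delta>) z \<tau>c = 1 + complex_of_real \<tau>c * (z + complex_of_real A0)"
      by (simp add: Dl_def B0_def[symmetric] mult.commute mult.left_commute)
    have imx: "Im (1 + complex_of_real \<tau>c * (z + complex_of_real A0)) \<noteq> 0"
      using that(2) tau_c(1) by simp
    show ?thesis using eqD imx by (metis zero_complex.sel(2))
  qed
  have c1: "deriv (\<lambda>l. charfun \<beta> \<delta> l \<tau>c) (\<i> * complex_of_real \<omega>) \<noteq> 0"
    using Dlnz[OF root_pos] omega_pos by (simp add: derivc)
  have c2: "deriv (\<lambda>l. charfun \<beta> \<delta> l \<tau>c) (- \<i> * complex_of_real \<omega>) \<noteq> 0"
    using Dlnz[OF root_neg] omega_pos by (simp add: derivc)
  have c3: "\<exists>\<epsilon>>0. \<exists>lam :: real \<Rightarrow> complex.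
          lam \<tau>c = \<i> * complex_of_real \<omega>
          \<and> lam C1_differentiable_on ball \<tau>c \<epsilon>
          \<and> (\<forall>\<tau>\<in>ball \<tau>c \<epsilon>. charfun \<beta> \<delta> (lam \<tau>) \<tau> = 0)"
    unfolding charfun_Delta
    by (rule branch[OF openJ tcJ dA dB cAd cBd])
       (use root_pos Dlnz[OF root_pos] omega_pos in \<open>simp_all add: charfun_Delta\<close>)
  have c4: "sgn (Re (vector_derivative lam (at \<tau>c)))
              = sgn (- ((Bcoef \<beta> \<delta> \<tau>c) ^ 3)
                     - (Bcoef \<beta> \<delta> \<tau>c) ^ 2 * deriv (Bcoef \<beta> \<delta>) \<tau>c * \<tau>c
                     + Bcoef \<beta> \<delta> \<tau>c * ((Acoef \<beta> \<delta> \<tau>c) ^ 2 + deriv (Acoef \<beta> \<delta>) \<tau>c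
                          + Acoef \<beta> \<delta> \<tau>c * deriv (Acoef \<beta> \<delta>) \<tau>c * \<tau>c)
                     - deriv (Bcoef \<beta> \<delta>) \<tau>c * Acoef \<beta> \<delta> \<tau>c)"
    if "\<epsilon> > 0" "lam \<tau>c = \<i> * complex_of_real \<omega>" "lam differentiable (at \<tau>c)"
       "\<forall>\<tau>\<in>ball \<tau>c \<epsilon>. charfun \<beta> \<delta> (lam \<tau>) \<tau> = 0" for \<epsilon> lam
  proof -
    have L: "(lam has_vector_derivative vector_derivative lam (at \<tau>c)) (at \<tau>c)"
      using that(3) by (simp add: vector_derivative_works)
    have "vector_derivative lam (at \<tau>c) * Dl (Bcoef \<beta> \<delta>) (lam \<tau>c) \<tau>c
          + Dt (Bcoef \<beta> \<delta>) (\<lambda>_. Ad0 \<tau>c) (\<lambda>_. Bd0 \<tau>c) (lam \<tau>c) \<tau>c = 0"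
      by (rule implicit_deriv[OF _ _ L that(1)]) (use dA dB tcJ that(4) in \<open>auto simp: charfun_Delta\<close>)
    then have eq: "vector_derivative lam (at \<tau>c) * (1 + of_real B0 * of_real \<tau>c * exp (- (\<i> * complex_of_real \<omega>) * complex_of_real \<tau>c))
        + (of_real (Ad0 \<tau>c) - of_real (Bd0 \<tau>c) * exp (- (\<i> * complex_of_real \<omega>) * complex_of_real \<tau>c)
           + of_real B0 * (\<i> * complex_of_real \<omega>) * exp (- (\<i> * complex_of_real \<omega>) * complex_of_real \<tau>c)) = 0"
      using that(2) by (simp add: Dl_def Dt_def B0_def)
    have root': "\<i> * complex_of_real \<omega> + of_real A0 - of_real B0 * exp (- (\<i> * complex_of_real \<omega>) * complex_of_real \<tau>c) = 0"
      using root_pos by (simp add: charfun_def A0_def B0_def)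
    show ?thesis
      using sign_lemma[OF tau_c(1) omega_pos A0pos B0A0 root' eq]
      by (simp add: dAc dBc A0_def B0_def)
  qed
  show ?thesis using c1 c2 c3 c4 by blast
qed


end
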